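(* Let $\beta=\beta_n\ge0$ with $n\log(n)\beta_n\to0$, and let $(\lambda_1,\dots,\lambda_n)$ have law $P_{n,\beta}(\mathrm{d}\lambda)=\frac{1}{Z_{n,\beta}}\exp(-\frac12\sum_i\lambda_i^2)\prod_{i<j}|\lambda_i-\lambda_j|^\beta\prod_i\mathrm{d}\lambda_i$. Let $\delta_n\to\delta>0$, $a_n=\delta_n\sqrt{2\log n}$, $b_n=\sqrt{2\log n}-\frac{\log\log n+2\log\delta_n+\log(4\pi)}{2\sqrt{2\log n}}$, and $\mu=e^{-x/\delta}\,\mathrm{d}x$. Let $\rho_n$ be the density of $(a_n(\lambda_i-b_n))_{1\le i\le n}$ with respect to $\mu^{\otimes n}$ and $R^n_k(x_1,\dots,x_k)=\frac{n!}{(n-k)!}\int_{\mathbb{R}^{n-k}}\rho_n(x_1,\dots,x_n)\,\mathrm{d}\mu^{\otimes(n-k)}(x_{k+1},\dots,x_n)$ for $1\le k\le n$. Let $K\subset\mathbb{R}$ be compact. Then there exists $\Theta_K>0$ such that for all $n$ large enough, all integers $1\le k\le n$ and all $(x_1,\dots,x_k)\in K^k$, $$R^n_k(x_1,\dots,x_k)\le\Theta_K^k.$$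
   Context: $Z_{n,\beta}$ is the normalizing constant of $P_{n,\beta}$. *)

theory Defs
  imports "HOL-Analysis.Analysis"
begin

text \<open>Power |x|^b with the convention 0^0 = 1 (Isabelle's powr has 0 powr 0 = 0).\<close>
definition abspow :: "real \<Rightarrow> real \<Rightarrow> real" where
  "abspow x b = (if b = 0 then 1 else \<bar>x\<bar> powr b)"

definition beta_weight :: "nat \<Rightarrow> real \<Rightarrow> (nat \<Rightarrow> real) \<Rightarrow> real" where
  "beta_weight n \<beta> l =
     exp (- (1/2) * (\<Sum>i<n. (l i)\<^sup>2)) *
     (\<Prod>i<n. \<Prod>j\<in>{i<..<n}. abspow (l i - l j) \<beta>)"

definition Zconst :: "nat \<Rightarrow> real \<Rightarrow> ennreal" where
  "Zconst n \<beta> = (\<integral>\<^sup>+ l. ennreal (beta_weight n \<beta> l) \<partial>(\<Pi>\<^sub>M i\<in>{..<n}. lborel))"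

definition a_seq :: "(nat \<Rightarrow> real) \<Rightarrow> nat \<Rightarrow> real" where
  "a_seq ds n = ds n * sqrt (2 * ln (real n))"

definition b_seq :: "(nat \<Rightarrow> real) \<Rightarrow> nat \<Rightarrow> real" where
  "b_seq ds n = sqrt (2 * ln (real n))
     - (ln (ln (real n)) + 2 * ln (ds n) + ln (4 * pi)) / (2 * sqrt (2 * ln (real n)))"

definition mu_ref :: "real \<Rightarrow> real measure" where
  "mu_ref \<delta> = density lborel (\<lambda>t. ennreal (exp (- t / \<delta>)))"

text \<open>Density rho_n of (a(lambda_i - b))_i w.r.t. mu^{\<otimes>n} (the continuous version
  obtained by change of variables lambda_i = b + x_i / a).\<close>
definition rho :: "nat \<Rightarrow> real \<Rightarrow> real \<Rightarrow> real \<Rightarrow> real \<Rightarrow> (nat \<Rightarrow> real) \<Rightarrow> ennreal" where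
  "rho n \<beta> a b \<delta> x =
     ennreal (beta_weight n \<beta> (\<lambda>i. b + x i / a) * (\<Prod>i<n. exp (x i / \<delta>)) / a ^ n)
     / Zconst n \<beta>"

text \<open>k-point correlation function R^n_k; x gives the first k coordinates (indices 0..k-1),
  the remaining coordinates k..n-1 are integrated against mu^{\<otimes>(n-k)}.\<close>
definition corr :: "nat \<Rightarrow> nat \<Rightarrow> real \<Rightarrow> real \<Rightarrow> real \<Rightarrow> real \<Rightarrow> (nat \<Rightarrow> real) \<Rightarrow> ennreal" where
  "corr n k \<beta> a b \<delta> x =
     ennreal (fact n / fact (n - k)) *
     (\<integral>\<^sup>+ y. rho n \<beta> a b \<delta> (\<lambda>i. if i < k then x i else y i)
        \<partial>(\<Pi>\<^sub>M i\<in>{k..<n}. mu_ref \<delta>))"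

end

theory Submission
  imports Defs "HOL-Real_Asymp.Real_Asymp"
begin

interpretation PL: product_sigma_finite "\<lambda>_::nat. lborel :: real measure"
  by (simp add: product_sigma_finite_def lborel.sigma_finite_measure_axioms)

lemma PiM_affine:
  fixes f :: "(nat \<Rightarrow> real) \<Rightarrow> ennreal"
  assumes "finite I" "c \<noteq> 0" "f \<in> borel_measurable (PiM I (\<lambda>_. lborel))"
  shows "(\<integral>\<^sup>+x. f (\<lambda>i\<in>I. t + c * x i) \<partial>PiM I (\<lambda>_. lborel)) =
          ennreal ((1/\<bar>c\<bar>)^card I) * (\<integral>\<^sup>+x. f x \<partial>PiM I (\<lambda>_. lborel))"
  using assms(1,3)
proof (induction I arbitrary: f rule: finite_induct)
  case empty
  then show ?case by (simp add: PiM_empty restrict_def nn_integral_count_space_finite)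
next
  case (insert j I)
  note [measurable] = insert.prems
  define F where "F z = (\<integral>\<^sup>+y. f (z(j:=y)) \<partial>lborel)" for z
  have Fm[measurable]: "F \<in> borel_measurable (PiM I (\<lambda>_. lborel))"
    unfolding F_def by measurable
  have "(\<integral>\<^sup>+x. f (\<lambda>i\<in>insert j I. t + c * x i) \<partial>PiM (insert j I) (\<lambda>_. lborel))
     = (\<integral>\<^sup>+x. (\<integral>\<^sup>+y. f (\<lambda>i\<in>insert j I. t + c * (x(j:=y)) i) \<partial>lborel) \<partial>PiM I (\<lambda>_. lborel))"
    by (rule PL.product_nn_integral_insert) (use insert in auto)
  also have "\<dots> = (\<integral>\<^sup>+x. (\<integral>\<^sup>+y. f ((\<lambda>i\<in>I. t + c * x i)(j := t + c * y)) \<partial>lborel) \<partial>PiM I (\<lambda>_. lborel))"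
    using insert(2) by (intro nn_integral_cong arg_cong[where f=f]) (auto simp: fun_eq_iff restrict_def)
  also have "\<dots> = (\<integral>\<^sup>+x. ennreal (1/\<bar>c\<bar>) * F (\<lambda>i\<in>I. t + c * x i) \<partial>PiM I (\<lambda>_. lborel))"
  proof (intro nn_integral_cong)
    fix x :: "nat \<Rightarrow> real"
    let ?z = "(\<lambda>i\<in>I. t + c * x i)"
    have m: "(\<lambda>y. f (?z(j:=y))) \<in> borel_measurable borel" by measurable
    show "(\<integral>\<^sup>+y. f (?z(j := t + c * y)) \<partial>lborel) = ennreal (1/\<bar>c\<bar>) * F ?z"
      unfolding F_def using nn_integral_real_affine[OF m \<open>c \<noteq> 0\<close>, of t] \<open>c \<noteq> 0\<close>
      by (simp add: ennreal_mult'[symmetric] mult.assoc[symmetric] divide_simps flip: ennreal_mult)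
  qed
  also have "\<dots> = ennreal (1/\<bar>c\<bar>) * (\<integral>\<^sup>+x. F (\<lambda>i\<in>I. t + c * x i) \<partial>PiM I (\<lambda>_. lborel))"
    by (rule nn_integral_cmult) measurable
  also have "\<dots> = ennreal (1/\<bar>c\<bar>) * (ennreal ((1/\<bar>c\<bar>)^card I) * (\<integral>\<^sup>+x. F x \<partial>PiM I (\<lambda>_. lborel)))"
    by (simp only: insert.IH[OF Fm])
  also have "(\<integral>\<^sup>+x. F x \<partial>PiM I (\<lambda>_. lborel)) = (\<integral>\<^sup>+x. f x \<partial>PiM (insert j I) (\<lambda>_. lborel))"
    unfolding F_def by (rule PL.product_nn_integral_insert[symmetric]) (use insert in auto)
  finally show ?case using insert(1,2)
    by (simp add: mult.assoc[symmetric] ennreal_mult'[symmetric] flip: ennreal_mult)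
qed

lemma sets_PiM_density: "sets (PiM J (\<lambda>_. density lborel (\<lambda>t. ennreal (h t)))) = sets (PiM J (\<lambda>_. lborel :: real measure))"
  by (intro sets_PiM_cong) auto

lemma PiM_density:
  fixes h :: "real \<Rightarrow> real" and f :: "(nat \<Rightarrow> real) \<Rightarrow> ennreal"
  assumes hm[measurable]: "h \<in> borel_measurable borel" and "finite I"
    and "f \<in> borel_measurable (PiM I (\<lambda>_. lborel))"
  shows "(\<integral>\<^sup>+y. f y \<partial>PiM I (\<lambda>_. density lborel (\<lambda>t. ennreal (h t)))) =
         (\<integral>\<^sup>+y. f y * (\<Prod>i\<in>I. ennreal (h (y i))) \<partial>PiM I (\<lambda>_. lborel))"
  using assms(2,3)
proof (induction I arbitrary: f rule: finite_induct)
  case empty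
  then show ?case by (simp add: PiM_empty nn_integral_count_space_finite)
next
  case (insert j I)
  let ?D = "density lborel (\<lambda>t. ennreal (h t))"
  have sf: "sigma_finite_measure ?D"
    by (subst sigma_finite_measure.sigma_finite_iff_density_finite'[OF lborel.sigma_finite_measure_axioms]) auto
  interpret D: product_sigma_finite "\<lambda>_::nat. ?D"
    by (simp add: product_sigma_finite_def sf)
  note fm[measurable] = insert.prems
  have fm': "f \<in> borel_measurable (PiM (insert j I) (\<lambda>_. ?D))"
    using fm by (subst measurable_cong_sets[OF sets_PiM_density refl])
  define G where "G x = (\<integral>\<^sup>+y. f (x(j:=y)) * ennreal (h y) \<partial>lborel)" for x
  have Gm[measurable]: "G \<in> borel_measurable (PiM I (\<lambda>_. lborel))"
    unfolding G_def by measurable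
  have "(\<integral>\<^sup>+y. f y \<partial>PiM (insert j I) (\<lambda>_. ?D))
      = (\<integral>\<^sup>+x. (\<integral>\<^sup>+y. f (x(j:=y)) \<partial>?D) \<partial>PiM I (\<lambda>_. ?D))"
    by (rule D.product_nn_integral_insert) (use insert fm' in auto)
  also have "\<dots> = (\<integral>\<^sup>+x. G x \<partial>PiM I (\<lambda>_. ?D))"
  proof (intro nn_integral_cong)
    fix x assume "x \<in> space (PiM I (\<lambda>_. ?D))"
    then have x: "x \<in> space (PiM I (\<lambda>_. lborel))" by (simp add: space_PiM)
    have "(\<lambda>y. f (x(j:=y))) \<in> borel_measurable lborel"
      using x by measurable
    then show "(\<integral>\<^sup>+y. f (x(j:=y)) \<partial>?D) = G x"
      unfolding G_def by (subst nn_integral_density) (auto simp: mult.commute)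
  qed
  also have "\<dots> = (\<integral>\<^sup>+x. G x * (\<Prod>i\<in>I. ennreal (h (x i))) \<partial>PiM I (\<lambda>_. lborel))"
    by (rule insert.IH[OF Gm])
  also have "\<dots> = (\<integral>\<^sup>+x. (\<integral>\<^sup>+y. f (x(j:=y)) * (\<Prod>i\<in>insert j I. ennreal (h ((x(j:=y)) i))) \<partial>lborel) \<partial>PiM I (\<lambda>_. lborel))"
  proof (intro nn_integral_cong)
    fix x assume x: "x \<in> space (PiM I (\<lambda>_. lborel :: real measure))"
    have hm'[measurable]: "h \<in> borel_measurable lborel" by simp
    have "(\<integral>\<^sup>+y. f (x(j:=y)) * (\<Prod>i\<in>insert j I. ennreal (h ((x(j:=y)) i))) \<partial>lborel)
        = (\<integral>\<^sup>+y. (f (x(j:=y)) * ennreal (h y)) * (\<Prod>i\<in>I. ennreal (h (x i))) \<partial>lborel)"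
      using insert(1,2) by (intro nn_integral_cong) (auto simp: mult_ac intro!: arg_cong2[where f="(*)"] prod.cong)
    also have "\<dots> = G x * (\<Prod>i\<in>I. ennreal (h (x i)))"
      unfolding G_def by (rule nn_integral_multc) (use x in measurable)
    finally show "G x * (\<Prod>i\<in>I. ennreal (h (x i))) = (\<integral>\<^sup>+y. f (x(j:=y)) * (\<Prod>i\<in>insert j I. ennreal (h ((x(j:=y)) i))) \<partial>lborel)" ..
  qed
  also have "\<dots> = (\<integral>\<^sup>+y. f y * (\<Prod>i\<in>insert j I. ennreal (h (y i))) \<partial>PiM (insert j I) (\<lambda>_. lborel))"
    by (rule PL.product_nn_integral_insert[symmetric]) (use insert in auto)
  finally show ?case .
qed

lemma abspow_nonneg: "abspow x b \<ge> 0"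
  by (simp add: abspow_def)

lemma abspow_le_exp: "b \<ge> 0 \<Longrightarrow> abspow x b \<le> exp (b * \<bar>x\<bar>)"
proof (cases "b = 0 \<or> x = 0")
  case True then show ?thesis by (auto simp: abspow_def)
next
  case False
  assume b: "b \<ge> 0"
  have "ln \<bar>x\<bar> \<le> \<bar>x\<bar>" using False by (simp add: ln_le_minus_one[of "\<bar>x\<bar>"]) (smt (verit) ln_le_minus_one zero_less_abs_iff)
  then have "b * ln \<bar>x\<bar> \<le> b * \<bar>x\<bar>" using b by (simp add: mult_left_mono)
  then show ?thesis using False by (simp add: abspow_def powr_def)
qed

lemma abspow_measurable[measurable (raw)]:
  "f \<in> borel_measurable M \<Longrightarrow> (\<lambda>x. abspow (f x) b) \<in> borel_measurable M"
  by (cases "b = 0") (simp_all add: abspow_def)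

definition wp :: "nat \<Rightarrow> nat \<Rightarrow> real \<Rightarrow> (nat \<Rightarrow> real) \<Rightarrow> real" where
  "wp m n \<beta> l = exp (- (1/2) * (\<Sum>i\<in>{m..<n}. (l i)\<^sup>2)) *
     (\<Prod>i\<in>{m..<n}. \<Prod>j\<in>{i<..<n}. abspow (l i - l j) \<beta>)"

definition Zg :: "nat \<Rightarrow> nat \<Rightarrow> real \<Rightarrow> ennreal" where
  "Zg m n \<beta> = (\<integral>\<^sup>+ l. ennreal (wp m n \<beta> l) \<partial>PiM {m..<n} (\<lambda>_. lborel))"

lemma wp_nonneg: "wp m n \<beta> l \<ge> 0"
  unfolding wp_def by (intro mult_nonneg_nonneg prod_nonneg abspow_nonneg) auto

lemma wp_measurable[measurable]: "(\<lambda>l. wp m n \<beta> l) \<in> borel_measurable (PiM {m..<n} (\<lambda>_. lborel))"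
  unfolding wp_def by measurable

lemma wp_cong: "(\<And>i. m \<le> i \<Longrightarrow> i < n \<Longrightarrow> l i = l' i) \<Longrightarrow> wp m n \<beta> l = wp m n \<beta> l'"
  unfolding wp_def by (intro arg_cong2[where f="(*)"] arg_cong[where f=exp] sum.cong prod.cong refl) auto

lemma beta_weight_wp: "beta_weight n \<beta> = wp 0 n \<beta>"
  by (simp add: fun_eq_iff beta_weight_def wp_def atLeast0LessThan)

lemma Zconst_Zg: "Zconst n \<beta> = Zg 0 n \<beta>"
  by (simp add: Zconst_def Zg_def beta_weight_wp atLeast0LessThan)

lemma Zg_nn: "Zg n n \<beta> = 1"
  by (simp add: Zg_def wp_def PiM_empty nn_integral_count_space_finite)

lemma numer_bound:
  assumes "k \<le> n" "\<beta> \<ge> 0"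
  shows "beta_weight n \<beta> (\<lambda>i. if i < k then t i else y i) \<le>
    exp (- (1/2) * (\<Sum>i<k. (t i)\<^sup>2)) * exp (\<beta> * ((n + k) * (\<Sum>i<k. \<bar>t i\<bar>) + k * (\<Sum>i\<in>{k..<n}. \<bar>y i\<bar>)))
    * wp k n \<beta> y"
proof -
  define z where "z = (\<lambda>i. if i < k then t i else y i)"
  define P1 where "P1 = (\<Prod>i\<in>{0..<k}. \<Prod>j\<in>{i<..<n}. abspow (z i - z j) \<beta>)"
  have s1: "(\<Sum>i<n. (z i)\<^sup>2) = (\<Sum>i<k. (t i)\<^sup>2) + (\<Sum>i\<in>{k..<n}. (y i)\<^sup>2)"
    using sum.atLeastLessThan_concat[of 0 k n "\<lambda>i. (z i)\<^sup>2"] assms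
    by (simp add: atLeast0LessThan z_def)
  have p1: "(\<Prod>i<n. \<Prod>j\<in>{i<..<n}. abspow (z i - z j) \<beta>) = P1 * (\<Prod>i\<in>{k..<n}. \<Prod>j\<in>{i<..<n}. abspow (y i - y j) \<beta>)"
  proof -
    have "(\<Prod>i<n. \<Prod>j\<in>{i<..<n}. abspow (z i - z j) \<beta>) = P1 * (\<Prod>i\<in>{k..<n}. \<Prod>j\<in>{i<..<n}. abspow (z i - z j) \<beta>)"
      using prod.atLeastLessThan_concat[of 0 k n "\<lambda>i. \<Prod>j\<in>{i<..<n}. abspow (z i - z j) \<beta>"] assms
      by (simp add: atLeast0LessThan P1_def)
    also have "(\<Prod>i\<in>{k..<n}. \<Prod>j\<in>{i<..<n}. abspow (z i - z j) \<beta>) = (\<Prod>i\<in>{k..<n}. \<Prod>j\<in>{i<..<n}. abspow (y i - y j) \<beta>)"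
      by (intro prod.cong refl) (auto simp: z_def)
    finally show ?thesis .
  qed
  have bw: "beta_weight n \<beta> z = exp (- (1/2) * (\<Sum>i<k. (t i)\<^sup>2)) * P1 * wp k n \<beta> y"
  proof -
    have e: "exp (- (1/2) * ((\<Sum>i<k. (t i)\<^sup>2) + (\<Sum>i\<in>{k..<n}. (y i)\<^sup>2))) =
      exp (- (1/2) * (\<Sum>i<k. (t i)\<^sup>2)) * exp (- (1/2) * (\<Sum>i\<in>{k..<n}. (y i)\<^sup>2))"
      by (simp add: exp_add[symmetric] algebra_simps)
    show ?thesis unfolding beta_weight_def wp_def s1 p1 e by (simp only: mult_ac)
  qed
  have "P1 \<le> (\<Prod>i\<in>{0..<k}. \<Prod>j\<in>{i<..<n}. exp (\<beta> * (\<bar>z i\<bar> + \<bar>z j\<bar>)))"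
    unfolding P1_def
  proof (intro prod_mono conjI)
    fix i j
    show "0 \<le> abspow (z i - z j) \<beta>" by (rule abspow_nonneg)
    have "abspow (z i - z j) \<beta> \<le> exp (\<beta> * \<bar>z i - z j\<bar>)" by (rule abspow_le_exp[OF assms(2)])
    also have "\<dots> \<le> exp (\<beta> * (\<bar>z i\<bar> + \<bar>z j\<bar>))" using assms(2) by (intro exp_mono mult_left_mono) auto
    finally show "abspow (z i - z j) \<beta> \<le> exp (\<beta> * (\<bar>z i\<bar> + \<bar>z j\<bar>))" .
  qed (auto intro: prod_nonneg abspow_nonneg)
  also have "\<dots> = exp (\<beta> * (\<Sum>i\<in>{0..<k}. \<Sum>j\<in>{i<..<n}. \<bar>z i\<bar> + \<bar>z j\<bar>))"
    by (simp add: exp_sum sum_distrib_left)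
  also have "\<dots> \<le> exp (\<beta> * (\<Sum>i\<in>{0..<k}. \<Sum>j\<in>{0..<n}. \<bar>z i\<bar> + \<bar>z j\<bar>))"
    using assms(2) by (intro exp_mono mult_left_mono sum_mono sum_mono2) auto
  also have "(\<Sum>i\<in>{0..<k}. \<Sum>j\<in>{0..<n}. \<bar>z i\<bar> + \<bar>z j\<bar>) = n * (\<Sum>i<k. \<bar>t i\<bar>) + k * (\<Sum>j\<in>{0..<n}. \<bar>z j\<bar>)"
    by (simp add: sum.distrib sum_distrib_left[symmetric] atLeast0LessThan z_def)
  also have "(\<Sum>j\<in>{0..<n}. \<bar>z j\<bar>) = (\<Sum>i<k. \<bar>t i\<bar>) + (\<Sum>i\<in>{k..<n}. \<bar>y i\<bar>)"
    using sum.atLeastLessThan_concat[of 0 k n "\<lambda>i. \<bar>z i\<bar>"] assms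
    by (simp add: atLeast0LessThan z_def)
  finally have "P1 \<le> exp (\<beta> * ((n + k) * (\<Sum>i<k. \<bar>t i\<bar>) + k * (\<Sum>i\<in>{k..<n}. \<bar>y i\<bar>)))"
    by (simp add: algebra_simps)
  then show ?thesis unfolding z_def[symmetric] bw
    by (intro mult_right_mono mult_left_mono wp_nonneg) auto
qed

lemma oneD_lower:
  fixes p :: "nat \<Rightarrow> real"
  assumes J: "finite J" "card J \<le> N" and N: "N \<ge> 1" and b: "\<beta> \<ge> 0"
  shows "ennreal (exp (-1/2) * ((1/(2*N)) powr \<beta>) ^ N) \<le>
    (\<integral>\<^sup>+u. ennreal (exp (- (1/2) * u\<^sup>2) * (\<Prod>j\<in>J. abspow (u - p j) \<beta>)) \<partial>lborel)"
proof -
  define r :: real where "r = 1/(2*N)"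
  have r0: "r > 0" and r1: "r \<le> 1" using N by (auto simp: r_def field_simps)
  define U where "U = (\<Union>j\<in>J. {p j - r <..< p j + r})"
  define S where "S = {-1..1::real} - U"
  define C where "C = exp (-1/2) * (r powr \<beta>) ^ N"
  have Ssets: "S \<in> sets lborel" "U \<in> sets lborel" using J unfolding S_def U_def by auto
  have rb1: "r powr \<beta> \<le> 1" using r0 r1 b by (metis less_eq_real_def powr_mono2 powr_one_eq_one)
  have rb0: "r powr \<beta> \<ge> 0" by simp
  have pt: "ennreal C * indicator S u \<le> ennreal (exp (- (1/2) * u\<^sup>2) * (\<Prod>j\<in>J. abspow (u - p j) \<beta>))" for u
  proof (cases "u \<in> S")
    case False then show ?thesis by simp
  next
    case True
    then have u1: "\<bar>u\<bar> \<le> 1" and uU: "\<forall>j\<in>J. \<bar>u - p j\<bar> \<ge> r" unfolding S_def U_def by auto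
    have "u\<^sup>2 \<le> 1" using u1 by (simp add: abs_square_le_1)
    then have e: "exp (-1/2) \<le> exp (- (1/2) * u\<^sup>2)" by simp
    have "(r powr \<beta>) ^ N \<le> (r powr \<beta>) ^ card J"
      using rb1 rb0 J by (intro power_decreasing) auto
    also have "\<dots> = (\<Prod>j\<in>J. r powr \<beta>)" by simp
    also have "\<dots> \<le> (\<Prod>j\<in>J. abspow (u - p j) \<beta>)"
    proof (intro prod_mono conjI)
      fix j assume "j \<in> J"
      then have "\<bar>u - p j\<bar> \<ge> r" using uU by auto
      then show "r powr \<beta> \<le> abspow (u - p j) \<beta>"
        using r0 b by (cases "\<beta> = 0") (auto simp: abspow_def intro: powr_mono2)
    qed (simp)
    finally have "C \<le> exp (- (1/2) * u\<^sup>2) * (\<Prod>j\<in>J. abspow (u - p j) \<beta>)"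
      unfolding C_def using e by (intro mult_mono) (auto intro: prod_nonneg abspow_nonneg)
    then show ?thesis using True by (simp add: ennreal_leI)
  qed
  have emU: "emeasure lborel U \<le> 1"
  proof -
    have "emeasure lborel U \<le> (\<Sum>j\<in>J. emeasure lborel {p j - r <..< p j + r})"
      unfolding U_def using J by (intro emeasure_subadditive_finite) auto
    also have "\<dots> = (\<Sum>j\<in>J. ennreal (2 * r))" using r0 by (simp add: emeasure_lborel_Ioo)
    also have "\<dots> = ennreal (card J * (2 * r))" using r0 by (simp add: ennreal_of_nat_eq_real_of_nat ennreal_mult)
    also have "\<dots> \<le> ennreal (N * (2 * r))" using J r0 by (intro ennreal_leI mult_right_mono) auto
    also have "N * (2 * r) = 1" using N by (simp add: r_def)
    finally show ?thesis by simp
  qed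
  have emS: "1 \<le> emeasure lborel S"
  proof -
    have "ennreal 2 = emeasure lborel {-1..1::real}" by (simp add: emeasure_lborel_Icc)
    also have "\<dots> \<le> emeasure lborel (S \<union> U)" using Ssets by (intro emeasure_mono) (auto simp: S_def)
    also have "\<dots> \<le> emeasure lborel S + emeasure lborel U" by (intro emeasure_subadditive Ssets)
    also have "\<dots> \<le> emeasure lborel S + 1" using emU by (intro add_left_mono)
    finally have "ennreal 2 \<le> emeasure lborel S + 1" .
    then show ?thesis
    proof (cases "emeasure lborel S")
      case (real q)
      with \<open>ennreal 2 \<le> emeasure lborel S + 1\<close> have "2 \<le> ennreal q + 1" by simp
      then have "1 \<le> q" using real
        by (smt (verit, ccfv_threshold) ennreal_1 ennreal_le_iff ennreal_plus_if one_add_one)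
      then show ?thesis using real by simp
    qed simp
  qed
  have "ennreal C = ennreal C * 1" by simp
  also have "\<dots> \<le> ennreal C * emeasure lborel S" by (intro mult_left_mono emS) auto
  also have "\<dots> = (\<integral>\<^sup>+u. ennreal C * indicator S u \<partial>lborel)"
    using Ssets by (simp add: nn_integral_cmult_indicator)
  also have "\<dots> \<le> (\<integral>\<^sup>+u. ennreal (exp (- (1/2) * u\<^sup>2) * (\<Prod>j\<in>J. abspow (u - p j) \<beta>)) \<partial>lborel)"
    by (intro nn_integral_mono pt)
  finally show ?thesis by (simp add: C_def r_def)
qed

definition cN :: "nat \<Rightarrow> real \<Rightarrow> real" where
  "cN N \<beta> = exp (-1/2) * ((1/(2*N)) powr \<beta>) ^ N"

lemma cN_pos: "cN N \<beta> > 0" if "N \<ge> 1"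
  using that by (simp add: cN_def)

lemma wp_insert:
  assumes "m < n"
  shows "wp m n \<beta> (x(m:=u)) = (exp (- (1/2) * u\<^sup>2) * (\<Prod>j\<in>{Suc m..<n}. abspow (u - x j) \<beta>)) * wp (Suc m) n \<beta> x"
proof -
  have ins: "{m..<n} = insert m {Suc m..<n}" using assms by auto
  have gt: "{m<..<n} = {Suc m..<n}" by auto
  have s: "(\<Sum>i\<in>{Suc m..<n}. ((x(m:=u)) i)\<^sup>2) = (\<Sum>i\<in>{Suc m..<n}. (x i)\<^sup>2)"
    by (intro sum.cong) auto
  have p: "(\<Prod>i\<in>{Suc m..<n}. \<Prod>j\<in>{i<..<n}. abspow ((x(m:=u)) i - (x(m:=u)) j) \<beta>) =
       (\<Prod>i\<in>{Suc m..<n}. \<Prod>j\<in>{i<..<n}. abspow (x i - x j) \<beta>)"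
    by (intro prod.cong) auto
  have p2: "(\<Prod>j\<in>{Suc m..<n}. abspow ((x(m:=u)) m - (x(m:=u)) j) \<beta>) = (\<Prod>j\<in>{Suc m..<n}. abspow (u - x j) \<beta>)"
    by (intro prod.cong) auto
  have e: "exp (- ((u\<^sup>2 + A) / 2)) = exp (- (u\<^sup>2 / 2)) * exp (- (A / 2))" for A :: real
    by (simp add: exp_add[symmetric] algebra_simps add_divide_distrib)
  show ?thesis
    unfolding wp_def ins by (simp add: s p p2 gt e mult_ac)
qed

lemma Zg_step:
  assumes "m < n" "\<beta> \<ge> 0"
  shows "ennreal (cN n \<beta>) * Zg (Suc m) n \<beta> \<le> Zg m n \<beta>"
proof -
  have ins: "{m..<n} = insert m {Suc m..<n}" using assms by auto
  have wm: "(\<lambda>l. ennreal (wp m n \<beta> l)) \<in> borel_measurable (PiM (insert m {Suc m..<n}) (\<lambda>_. lborel))"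
    using wp_measurable[of m n \<beta>] unfolding ins by measurable
  have "Zg m n \<beta> = (\<integral>\<^sup>+x. (\<integral>\<^sup>+u. ennreal (wp m n \<beta> (x(m:=u))) \<partial>lborel) \<partial>PiM {Suc m..<n} (\<lambda>_. lborel))"
    unfolding Zg_def ins by (rule PL.product_nn_integral_insert[OF _ _ wm]) auto
  also have "\<dots> = (\<integral>\<^sup>+x. ennreal (wp (Suc m) n \<beta> x) * (\<integral>\<^sup>+u. ennreal (exp (- (1/2) * u\<^sup>2) * (\<Prod>j\<in>{Suc m..<n}. abspow (u - x j) \<beta>)) \<partial>lborel) \<partial>PiM {Suc m..<n} (\<lambda>_. lborel))"
  proof (intro nn_integral_cong)
    fix x
    have "(\<integral>\<^sup>+u. ennreal (wp m n \<beta> (x(m:=u))) \<partial>lborel) =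
       (\<integral>\<^sup>+u. ennreal (exp (- (1/2) * u\<^sup>2) * (\<Prod>j\<in>{Suc m..<n}. abspow (u - x j) \<beta>)) * ennreal (wp (Suc m) n \<beta> x) \<partial>lborel)"
      using assms(1) by (intro nn_integral_cong) (simp add: wp_insert ennreal_mult wp_nonneg prod_nonneg abspow_nonneg)
    also have "\<dots> = (\<integral>\<^sup>+u. ennreal (exp (- (1/2) * u\<^sup>2) * (\<Prod>j\<in>{Suc m..<n}. abspow (u - x j) \<beta>)) \<partial>lborel) * ennreal (wp (Suc m) n \<beta> x)"
      by (rule nn_integral_multc) measurable
    finally show "(\<integral>\<^sup>+u. ennreal (wp m n \<beta> (x(m:=u))) \<partial>lborel) = ennreal (wp (Suc m) n \<beta> x) * (\<integral>\<^sup>+u. ennreal (exp (- (1/2) * u\<^sup>2) * (\<Prod>j\<in>{Suc m..<n}. abspow (u - x j) \<beta>)) \<partial>lborel)"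
      by (simp add: mult.commute)
  qed
  also have "\<dots> \<ge> (\<integral>\<^sup>+x. ennreal (wp (Suc m) n \<beta> x) * ennreal (cN n \<beta>) \<partial>PiM {Suc m..<n} (\<lambda>_. lborel))"
  proof (intro nn_integral_mono mult_left_mono)
    fix x :: "nat \<Rightarrow> real"
    show "ennreal (cN n \<beta>) \<le> (\<integral>\<^sup>+u. ennreal (exp (- (1/2) * u\<^sup>2) * (\<Prod>j\<in>{Suc m..<n}. abspow (u - x j) \<beta>)) \<partial>lborel)"
      unfolding cN_def using assms by (intro oneD_lower) auto
  qed simp
  also have "(\<integral>\<^sup>+x. ennreal (wp (Suc m) n \<beta> x) * ennreal (cN n \<beta>) \<partial>PiM {Suc m..<n} (\<lambda>_. lborel)) = ennreal (cN n \<beta>) * Zg (Suc m) n \<beta>"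
    unfolding Zg_def by (subst nn_integral_multc) (auto simp: mult.commute)
  finally show ?thesis .
qed

lemma Zg_iter:
  assumes "k \<le> n" "\<beta> \<ge> 0"
  shows "ennreal (cN n \<beta> ^ k) * Zg k n \<beta> \<le> Zg 0 n \<beta>"
  using assms(1)
proof (induction k)
  case 0 then show ?case by simp
next
  case (Suc k)
  have c0: "cN n \<beta> \<ge> 0" by (simp add: cN_def)
  have "ennreal (cN n \<beta> ^ Suc k) * Zg (Suc k) n \<beta> = ennreal (cN n \<beta> ^ k) * (ennreal (cN n \<beta>) * Zg (Suc k) n \<beta>)"
    using c0 by (simp add: ennreal_mult' mult_ac)
  also have "\<dots> \<le> ennreal (cN n \<beta> ^ k) * Zg k n \<beta>"
    using Suc.prems assms(2) by (intro mult_left_mono Zg_step) auto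
  also have "\<dots> \<le> Zg 0 n \<beta>" using Suc by simp
  finally show ?case .
qed

lemma abspow_scale: "c > 0 \<Longrightarrow> abspow (c * x) b = c powr b * abspow x b"
  by (auto simp: abspow_def abs_mult powr_mult)

lemma sq_bound: fixes \<eta> \<epsilon> v :: real shows "\<eta> > 0 \<Longrightarrow> - (1/2) * v\<^sup>2 + \<epsilon> * \<bar>v\<bar> \<le> - ((1 - \<eta>)/2) * v\<^sup>2 + \<epsilon>\<^sup>2 / (2*\<eta>)"
proof -
  assume h: "\<eta> > 0"
  have "0 \<le> (\<eta> * \<bar>v\<bar> - \<epsilon>)\<^sup>2 / (2*\<eta>)" using h by simp
  also have "(\<eta> * \<bar>v\<bar> - \<epsilon>)\<^sup>2 / (2*\<eta>) = \<eta> * v\<^sup>2 / 2 - \<epsilon> * \<bar>v\<bar> + \<epsilon>\<^sup>2 / (2*\<eta>)"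
    using h by (simp add: field_simps power2_eq_square)
  finally show ?thesis by (simp add: field_simps)
qed

lemma prod_pairs_le:
  assumes "q \<ge> (1::real)" "I \<subseteq> {..<n}"
  shows "(\<Prod>i\<in>I. \<Prod>j\<in>{i<..<n}. q) \<le> q ^ (n*n)"
proof -
  have fI: "finite I" using assms(2) finite_subset by blast
  have "(\<Prod>i\<in>I. \<Prod>j\<in>{i<..<n}. q) = (\<Prod>i\<in>I. q ^ card {i<..<n})" by simp
  also have "\<dots> \<le> (\<Prod>i\<in>I. q ^ n)"
    using assms by (intro prod_mono conjI power_increasing) auto
  also have "\<dots> = (q ^ n) ^ card I" by simp
  also have "\<dots> \<le> (q ^ n) ^ n"
    using assms card_mono[OF _ assms(2)] by (intro power_increasing one_le_power) auto
  finally show ?thesis by (simp add: power_mult)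
qed

lemma Zg_tilt:
  assumes mn: "m \<le> n" and eta: "0 < \<eta>" "\<eta> < 1" and eps: "\<epsilon> \<ge> 0" and b: "\<beta> \<ge> 0"
  shows "(\<integral>\<^sup>+l. ennreal (wp m n \<beta> l * exp (\<epsilon> * (\<Sum>i\<in>{m..<n}. \<bar>l i\<bar>))) \<partial>PiM {m..<n} (\<lambda>_. lborel))
     \<le> ennreal (exp (n * \<epsilon>\<^sup>2 / (2*\<eta>)) * (1/sqrt(1-\<eta>)) ^ n * ((1/sqrt(1-\<eta>)) powr \<beta>) ^ (n*n)) * Zg m n \<beta>"
proof -
  define I where "I = {m..<n}"
  define s where "s = sqrt (1 - \<eta>)"
  have s0: "0 < s" and s1: "s < 1" using eta by (auto simp: s_def)
  have ss: "s\<^sup>2 = 1 - \<eta>" using eta by (simp add: s_def)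
  define qb where "qb = (1/s) powr \<beta>"
  have qb1: "qb \<ge> 1" using s0 s1 b unfolding qb_def by (intro ge_one_powr_ge_zero) auto
  define W where "W l = (\<Prod>i\<in>I. \<Prod>j\<in>{i<..<n}. abspow (l i - l j) \<beta>)" for l :: "nat \<Rightarrow> real"
  define V where "V l = exp (- ((1 - \<eta>)/2) * (\<Sum>i\<in>I. (l i)\<^sup>2)) * W l" for l
  define E0 where "E0 = exp (n * \<epsilon>\<^sup>2 / (2*\<eta>))"
  have W0: "W l \<ge> 0" for l unfolding W_def by (intro prod_nonneg abspow_nonneg)
  have cardI: "card I \<le> n" unfolding I_def by simp
  have Vm[measurable]: "(\<lambda>l. ennreal (V l)) \<in> borel_measurable (PiM I (\<lambda>_. lborel))"
    unfolding V_def W_def I_def by measurable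
  have wpW: "wp m n \<beta> l = exp (- (1/2) * (\<Sum>i\<in>I. (l i)\<^sup>2)) * W l" for l
    by (simp add: wp_def W_def I_def)
  have pt1: "wp m n \<beta> l * exp (\<epsilon> * (\<Sum>i\<in>I. \<bar>l i\<bar>)) \<le> E0 * V l" for l
  proof -
    have "exp (- (1/2) * (\<Sum>i\<in>I. (l i)\<^sup>2)) * exp (\<epsilon> * (\<Sum>i\<in>I. \<bar>l i\<bar>))
        = exp (\<Sum>i\<in>I. - (1/2) * (l i)\<^sup>2 + \<epsilon> * \<bar>l i\<bar>)"
    proof -
      have "(\<Sum>i\<in>I. - (1/2) * (l i)\<^sup>2 + \<epsilon> * \<bar>l i\<bar>) = - (1/2) * (\<Sum>i\<in>I. (l i)\<^sup>2) + \<epsilon> * (\<Sum>i\<in>I. \<bar>l i\<bar>)"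
        by (simp only: sum.distrib sum_distrib_left)
      then show ?thesis by (simp only: exp_add)
    qed
    also have "\<dots> \<le> exp (\<Sum>i\<in>I. - ((1 - \<eta>)/2) * (l i)\<^sup>2 + \<epsilon>\<^sup>2 / (2*\<eta>))"
      using eta by (intro exp_mono sum_mono sq_bound) auto
    also have "\<dots> = exp (card I * (\<epsilon>\<^sup>2 / (2*\<eta>))) * exp (- ((1 - \<eta>)/2) * (\<Sum>i\<in>I. (l i)\<^sup>2))"
    proof -
      have "(\<Sum>i\<in>I. - ((1 - \<eta>)/2) * (l i)\<^sup>2 + \<epsilon>\<^sup>2 / (2*\<eta>)) = card I * (\<epsilon>\<^sup>2 / (2*\<eta>)) + - ((1 - \<eta>)/2) * (\<Sum>i\<in>I. (l i)\<^sup>2)"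
        by (simp only: sum.distrib sum_distrib_left sum_constant)
      then show ?thesis by (simp only: exp_add)
    qed
    also have "\<dots> \<le> E0 * exp (- ((1 - \<eta>)/2) * (\<Sum>i\<in>I. (l i)\<^sup>2))"
      unfolding E0_def using cardI eta by (intro mult_right_mono exp_mono) (auto simp: mult_right_mono divide_right_mono)
    finally show ?thesis
      unfolding wpW V_def using W0 by (metis (no_types, lifting) mult.assoc mult.commute mult_left_mono)
  qed
  have step1: "(\<integral>\<^sup>+l. ennreal (wp m n \<beta> l * exp (\<epsilon> * (\<Sum>i\<in>I. \<bar>l i\<bar>))) \<partial>PiM I (\<lambda>_. lborel))
      \<le> ennreal E0 * (\<integral>\<^sup>+l. ennreal (V l) \<partial>PiM I (\<lambda>_. lborel))"
  proof -
    have "(\<integral>\<^sup>+l. ennreal (wp m n \<beta> l * exp (\<epsilon> * (\<Sum>i\<in>I. \<bar>l i\<bar>))) \<partial>PiM I (\<lambda>_. lborel))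
      \<le> (\<integral>\<^sup>+l. ennreal E0 * ennreal (V l) \<partial>PiM I (\<lambda>_. lborel))"
      using pt1 by (intro nn_integral_mono) (simp add: ennreal_mult'[symmetric] E0_def ennreal_leI)
    also have "\<dots> = ennreal E0 * (\<integral>\<^sup>+l. ennreal (V l) \<partial>PiM I (\<lambda>_. lborel))"
      by (rule nn_integral_cmult) measurable
    finally show ?thesis .
  qed
  have aff: "(\<integral>\<^sup>+u. ennreal (V (\<lambda>i\<in>I. 0 + (1/s) * u i)) \<partial>PiM I (\<lambda>_. lborel))
     = ennreal (s ^ card I) * (\<integral>\<^sup>+l. ennreal (V l) \<partial>PiM I (\<lambda>_. lborel))"
    using PiM_affine[OF _ _ Vm, of "1/s" 0] s0 by (simp add: I_def)
  have VW: "V (\<lambda>i\<in>I. 0 + (1/s) * u i) = wp m n \<beta> u * (\<Prod>i\<in>I. \<Prod>j\<in>{i<..<n}. qb)" for u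
  proof -
    have h: "(\<Sum>i\<in>I. ((\<lambda>i\<in>I. 0 + (1/s) * u i) i)\<^sup>2) = (\<Sum>i\<in>I. (u i)\<^sup>2) / s\<^sup>2"
      by (simp add: sum_divide_distrib power_divide)
    have e: "- ((1 - \<eta>)/2) * (\<Sum>i\<in>I. ((\<lambda>i\<in>I. 0 + (1/s) * u i) i)\<^sup>2) = - (1/2) * (\<Sum>i\<in>I. (u i)\<^sup>2)"
      unfolding h ss[symmetric] using s0 by simp
    have w: "W (\<lambda>i\<in>I. 0 + (1/s) * u i) = W u * (\<Prod>i\<in>I. \<Prod>j\<in>{i<..<n}. qb)"
    proof -
      have "W (\<lambda>i\<in>I. 0 + (1/s) * u i) = (\<Prod>i\<in>I. \<Prod>j\<in>{i<..<n}. abspow ((1/s) * (u i - u j)) \<beta>)"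
        unfolding W_def by (intro prod.cong refl) (auto simp: I_def algebra_simps)
      also have "\<dots> = (\<Prod>i\<in>I. \<Prod>j\<in>{i<..<n}. qb * abspow (u i - u j) \<beta>)"
      proof -
        have sc: "abspow (x / s) \<beta> = qb * abspow x \<beta>" for x
          using abspow_scale[of "1/s" x \<beta>] s0 by (simp add: qb_def)
        show ?thesis by (simp add: sc)
      qed
      finally show ?thesis by (simp add: W_def prod.distrib mult.commute)
    qed
    show ?thesis unfolding V_def e w wpW by (simp add: mult_ac)
  qed
  have step2: "(\<integral>\<^sup>+u. ennreal (V (\<lambda>i\<in>I. 0 + (1/s) * u i)) \<partial>PiM I (\<lambda>_. lborel)) \<le> ennreal (qb ^ (n*n)) * Zg m n \<beta>"
  proof -
    have "(\<integral>\<^sup>+u. ennreal (V (\<lambda>i\<in>I. 0 + (1/s) * u i)) \<partial>PiM I (\<lambda>_. lborel))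
        \<le> (\<integral>\<^sup>+u. ennreal (qb ^ (n*n)) * ennreal (wp m n \<beta> u) \<partial>PiM I (\<lambda>_. lborel))"
    proof (intro nn_integral_mono)
      fix u
      have "wp m n \<beta> u * (\<Prod>i\<in>I. \<Prod>j\<in>{i<..<n}. qb) \<le> wp m n \<beta> u * qb ^ (n*n)"
        using qb1 by (intro mult_left_mono prod_pairs_le wp_nonneg) (auto simp: I_def)
      then show "ennreal (V (\<lambda>i\<in>I. 0 + (1/s) * u i)) \<le> ennreal (qb ^ (n*n)) * ennreal (wp m n \<beta> u)"
        unfolding VW using qb1 by (simp add: ennreal_mult'[symmetric] mult.commute ennreal_leI)
    qed
    also have "\<dots> = ennreal (qb ^ (n*n)) * Zg m n \<beta>"
      unfolding Zg_def I_def by (rule nn_integral_cmult) measurable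
    finally show ?thesis .
  qed
  have "(\<integral>\<^sup>+l. ennreal (V l) \<partial>PiM I (\<lambda>_. lborel)) = ennreal ((1/s) ^ card I) * (ennreal (s ^ card I) * (\<integral>\<^sup>+l. ennreal (V l) \<partial>PiM I (\<lambda>_. lborel)))"
    using s0 by (simp add: mult.assoc[symmetric] ennreal_mult'[symmetric] power_one_over flip: ennreal_mult power_mult_distrib)
  also have "\<dots> \<le> ennreal ((1/s) ^ card I) * (ennreal (qb ^ (n*n)) * Zg m n \<beta>)"
    unfolding aff[symmetric] by (intro mult_left_mono step2) auto
  also have "\<dots> \<le> ennreal ((1/s) ^ n) * (ennreal (qb ^ (n*n)) * Zg m n \<beta>)"
    using s0 s1 cardI by (intro mult_right_mono ennreal_leI power_increasing) auto
  finally have "(\<integral>\<^sup>+l. ennreal (V l) \<partial>PiM I (\<lambda>_. lborel)) \<le> ennreal ((1/s) ^ n) * (ennreal (qb ^ (n*n)) * Zg m n \<beta>)" .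
  then have "ennreal E0 * (\<integral>\<^sup>+l. ennreal (V l) \<partial>PiM I (\<lambda>_. lborel)) \<le> ennreal E0 * (ennreal ((1/s) ^ n) * (ennreal (qb ^ (n*n)) * Zg m n \<beta>))"
    by (intro mult_left_mono) auto
  also have "\<dots> = ennreal (E0 * (1/s) ^ n * qb ^ (n*n)) * Zg m n \<beta>"
    using s0 qb1 by (simp add: E0_def ennreal_mult mult.assoc)
  finally show ?thesis using step1 unfolding I_def E0_def qb_def s_def by simp
qed

lemma ratio_bound:
  assumes cz: "ennreal c * G \<le> Z" and c: "c > 0" and x: "x \<ge> 0"
  shows "ennreal x * G / Z \<le> ennreal (x / c)"
proof (cases G)
  case top
  then have "Z = top" using cz c by (simp add: ennreal_mult_top top_unique)
  then show ?thesis by simp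
next
  case (real g)
  show ?thesis
  proof (cases "g = 0")
    case True then show ?thesis using real by simp
  next
    case False
    then have g: "g > 0" using real by simp
    show ?thesis
    proof (cases Z)
      case top then show ?thesis by simp
    next
      case (real z)
      have czg: "c * g \<le> z" using cz \<open>G = ennreal g\<close> real c g
        by (simp add: ennreal_mult'[symmetric] ennreal_le_iff)
      then have z: "z > 0" using c g by (smt (verit) mult_pos_pos)
      have "ennreal x * G / Z = ennreal (x * g / z)"
        using real \<open>G = ennreal g\<close> x g z by (simp add: ennreal_mult'[symmetric] divide_ennreal)
      also have "\<dots> \<le> ennreal (x / c)"
      proof (intro ennreal_leI)
        have "x * g / z \<le> x * g / (c * g)" using czg c g x z by (intro divide_left_mono) auto
        then show "x * g / z \<le> x / c" using g by simp
      qed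
      finally show ?thesis .
    qed
  qed
qed

lemma beta_weight_cong: "(\<And>i. i < n \<Longrightarrow> l i = l' i) \<Longrightarrow> beta_weight n \<beta> l = beta_weight n \<beta> l'"
  unfolding beta_weight_def by (intro arg_cong2[where f="(*)"] arg_cong[where f=exp] sum.cong prod.cong refl) auto

lemma comp_meas[measurable]:
  fixes i k n :: nat shows "i < n \<Longrightarrow> (\<lambda>y. if i < k then (x i :: real) else y i) \<in> borel_measurable (PiM {k..<n} (\<lambda>_. lborel))"
proof (cases "i < k")
  case False
  assume "i < n"
  with False have "i \<in> {k..<n}" by simp
  then show ?thesis using False by (simp add: not_less)
qed simp

lemma ediv_mult: "0 \<le> p \<Longrightarrow> 0 \<le> q \<Longrightarrow> ennreal p / Z * ennreal q = ennreal (p * q) / Z"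
  by (simp only: ennreal_divide_times ennreal_times_divide ennreal_mult)

lemma corr_bound:
  fixes x :: "nat \<Rightarrow> real" and a b \<delta> \<beta> \<eta> :: real
  assumes kn: "1 \<le> k" "k \<le> n" and a: "a > 0" and d: "\<delta> > 0" and b0: "\<beta> \<ge> 0"
    and eta: "0 < \<eta>" "\<eta> < 1"
  defines "t \<equiv> (\<lambda>i. b + x i / a)"
  shows "corr n k \<beta> a b \<delta> x \<le> ennreal (fact n / fact (n-k) * (\<Prod>i<k. exp (x i / \<delta>)) / a^k
      * exp (- (1/2) * (\<Sum>i<k. (t i)\<^sup>2)) * exp (\<beta> * ((n+k) * (\<Sum>i<k. \<bar>t i\<bar>)))
      * (exp (n * (\<beta>*k)\<^sup>2 / (2*\<eta>)) * (1/sqrt(1-\<eta>))^n * ((1/sqrt(1-\<eta>)) powr \<beta>)^(n*n))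
      / cN n \<beta> ^ k)"
proof -
  define I where "I = {k..<n}"
  define Z where "Z = Zconst n \<beta>"
  define F :: real where "F = fact n / fact (n-k)"
  define Pre where "Pre = (\<Prod>i<k. exp (x i / \<delta>)) / a^n"
  define E where "E = exp (n * (\<beta>*k)\<^sup>2 / (2*\<eta>)) * (1/sqrt(1-\<eta>))^n * ((1/sqrt(1-\<eta>)) powr \<beta>)^(n*n)"
  define T where "T = exp (- (1/2) * (\<Sum>i<k. (t i)\<^sup>2)) * exp (\<beta> * ((n+k) * (\<Sum>i<k. \<bar>t i\<bar>)))"
  define f where "f w = ennreal (Pre * beta_weight n \<beta> (\<lambda>i. if i < k then t i else w i))" for w
  have F0: "F \<ge> 0" by (simp add: F_def)
  have Pre0: "Pre \<ge> 0" using a by (simp add: Pre_def prod_nonneg)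
  have E0: "E \<ge> 0" using eta by (simp add: E_def)
  have T0: "T \<ge> 0" by (simp add: T_def)
  have bw0: "beta_weight n \<beta> l \<ge> 0" for l
    unfolding beta_weight_wp by (rule wp_nonneg)
  have fm[measurable]: "f \<in> borel_measurable (PiM I (\<lambda>_. lborel))"
    unfolding f_def beta_weight_def I_def by measurable
  have rho_eq: "rho n \<beta> a b \<delta> (\<lambda>i. if i < k then x i else y i) * (\<Prod>i\<in>I. ennreal (exp (- y i / \<delta>)))
      = f (\<lambda>i\<in>I. b + (1/a) * y i) / Z" for y
  proof -
    have bw: "beta_weight n \<beta> (\<lambda>i. b + (if i < k then x i else y i) / a) =
              beta_weight n \<beta> (\<lambda>i. if i < k then t i else (\<lambda>i\<in>I. b + (1/a) * y i) i)"
      by (intro beta_weight_cong) (auto simp: t_def I_def)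
    have pn: "(\<Prod>i<n. exp ((if i < k then x i else y i) / \<delta>)) = (\<Prod>i<k. exp (x i / \<delta>)) * (\<Prod>i\<in>I. exp (y i / \<delta>))"
    proof -
      define g where "g i = exp ((if i < k then x i else y i) / \<delta>)" for i
      have "(\<Prod>i<n. g i) = (\<Prod>i<k. g i) * (\<Prod>i\<in>{k..<n}. g i)"
        using prod.atLeastLessThan_concat[of 0 k n g] kn by (simp add: atLeast0LessThan)
      moreover have "(\<Prod>i<k. g i) = (\<Prod>i<k. exp (x i / \<delta>))" by (intro prod.cong) (auto simp: g_def)
      moreover have "(\<Prod>i\<in>{k..<n}. g i) = (\<Prod>i\<in>I. exp (y i / \<delta>))" by (intro prod.cong) (auto simp: g_def I_def)
      ultimately show ?thesis by (simp add: g_def)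
    qed
    have p1: "(\<Prod>i\<in>I. exp (y i / \<delta>)) * (\<Prod>i\<in>I. exp (- y i / \<delta>)) = 1"
      by (simp add: prod.distrib[symmetric] exp_add[symmetric])
    have pe: "(\<Prod>i\<in>I. ennreal (exp (- y i / \<delta>))) = ennreal (\<Prod>i\<in>I. exp (- y i / \<delta>))"
      by (rule prod_ennreal) simp
    define A where "A = beta_weight n \<beta> (\<lambda>i. b + (if i < k then x i else y i) / a)"
    have A0: "A \<ge> 0" unfolding A_def by (rule bw0)
    have "rho n \<beta> a b \<delta> (\<lambda>i. if i < k then x i else y i) * (\<Prod>i\<in>I. ennreal (exp (- y i / \<delta>)))
        = ennreal (A * ((\<Prod>i<k. exp (x i / \<delta>)) * (\<Prod>i\<in>I. exp (y i / \<delta>))) / a ^ n) / Z * ennreal (\<Prod>i\<in>I. exp (- y i / \<delta>))"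
      unfolding rho_def Z_def pe A_def pn by simp
    also have "\<dots> = ennreal (A * ((\<Prod>i<k. exp (x i / \<delta>)) * (\<Prod>i\<in>I. exp (y i / \<delta>))) / a ^ n * (\<Prod>i\<in>I. exp (- y i / \<delta>))) / Z"
      using A0 a by (intro ediv_mult) (auto intro!: prod_nonneg divide_nonneg_pos mult_nonneg_nonneg)
    also have "A * ((\<Prod>i<k. exp (x i / \<delta>)) * (\<Prod>i\<in>I. exp (y i / \<delta>))) / a ^ n * (\<Prod>i\<in>I. exp (- y i / \<delta>))
        = Pre * A * ((\<Prod>i\<in>I. exp (y i / \<delta>)) * (\<Prod>i\<in>I. exp (- y i / \<delta>)))"
      by (simp add: Pre_def field_simps)
    also have "\<dots> = Pre * A" using p1 by simp
    finally show ?thesis unfolding f_def A_def bw .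
  qed
  have "corr n k \<beta> a b \<delta> x = ennreal F * (\<integral>\<^sup>+y. rho n \<beta> a b \<delta> (\<lambda>i. if i < k then x i else y i) \<partial>PiM I (\<lambda>_. mu_ref \<delta>))"
    unfolding corr_def F_def I_def by simp
  also have "(\<integral>\<^sup>+y. rho n \<beta> a b \<delta> (\<lambda>i. if i < k then x i else y i) \<partial>PiM I (\<lambda>_. mu_ref \<delta>))
      = (\<integral>\<^sup>+y. rho n \<beta> a b \<delta> (\<lambda>i. if i < k then x i else y i) * (\<Prod>i\<in>I. ennreal (exp (- y i / \<delta>))) \<partial>PiM I (\<lambda>_. lborel))"
    unfolding mu_ref_def
    by (rule PiM_density[where h="\<lambda>t. exp (- t / \<delta>)"]) (auto simp: I_def rho_def beta_weight_def Zconst_def)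
  also have "\<dots> = (\<integral>\<^sup>+y. f (\<lambda>i\<in>I. b + (1/a) * y i) / Z \<partial>PiM I (\<lambda>_. lborel))"
    by (simp only: rho_eq)
  also have "\<dots> = (\<integral>\<^sup>+y. f (\<lambda>i\<in>I. b + (1/a) * y i) \<partial>PiM I (\<lambda>_. lborel)) / Z"
    by (rule nn_integral_divide) measurable
  also have "(\<integral>\<^sup>+y. f (\<lambda>i\<in>I. b + (1/a) * y i) \<partial>PiM I (\<lambda>_. lborel)) = ennreal (a ^ (n-k)) * (\<integral>\<^sup>+w. f w \<partial>PiM I (\<lambda>_. lborel))"
    using PiM_affine[OF _ _ fm, of "1/a" b] a by (simp add: I_def)
  finally have ceq: "corr n k \<beta> a b \<delta> x = ennreal F * (ennreal (a ^ (n-k)) * (\<integral>\<^sup>+w. f w \<partial>PiM I (\<lambda>_. lborel)) / Z)" .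
  have hI: "(\<integral>\<^sup>+w. f w \<partial>PiM I (\<lambda>_. lborel)) \<le> ennreal (Pre * T) * (ennreal E * Zg k n \<beta>)"
  proof -
    have "(\<integral>\<^sup>+w. f w \<partial>PiM I (\<lambda>_. lborel)) \<le> (\<integral>\<^sup>+w. ennreal (Pre * T) * ennreal (wp k n \<beta> w * exp ((\<beta>*k) * (\<Sum>i\<in>{k..<n}. \<bar>w i\<bar>))) \<partial>PiM I (\<lambda>_. lborel))"
    proof (intro nn_integral_mono)
      fix w
      have "beta_weight n \<beta> (\<lambda>i. if i < k then t i else w i) \<le> T * (wp k n \<beta> w * exp ((\<beta>*k) * (\<Sum>i\<in>{k..<n}. \<bar>w i\<bar>)))"
        using numer_bound[OF kn(2) b0, of t w] unfolding T_def
        by (simp add: exp_add[symmetric] algebra_simps)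
      then have "Pre * beta_weight n \<beta> (\<lambda>i. if i < k then t i else w i) \<le> Pre * T * (wp k n \<beta> w * exp ((\<beta>*k) * (\<Sum>i\<in>{k..<n}. \<bar>w i\<bar>)))"
        using Pre0 by (simp add: mult.assoc mult_left_mono)
      then show "f w \<le> ennreal (Pre * T) * ennreal (wp k n \<beta> w * exp ((\<beta>*k) * (\<Sum>i\<in>{k..<n}. \<bar>w i\<bar>)))"
        unfolding f_def using Pre0 T0 by (simp add: ennreal_mult'[symmetric] ennreal_leI mult.assoc)
    qed
    also have "\<dots> = ennreal (Pre * T) * (\<integral>\<^sup>+w. ennreal (wp k n \<beta> w * exp ((\<beta>*k) * (\<Sum>i\<in>{k..<n}. \<bar>w i\<bar>))) \<partial>PiM I (\<lambda>_. lborel))"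
      by (rule nn_integral_cmult) (unfold I_def, measurable)
    also have "\<dots> \<le> ennreal (Pre * T) * (ennreal E * Zg k n \<beta>)"
      unfolding I_def E_def using Zg_tilt[OF kn(2) eta, of "\<beta>*k" \<beta>] b0 by (intro mult_left_mono) auto
    finally show ?thesis .
  qed
  have "corr n k \<beta> a b \<delta> x \<le> ennreal F * (ennreal (a ^ (n-k)) * (ennreal (Pre * T) * (ennreal E * Zg k n \<beta>)) / Z)"
    unfolding ceq using hI by (intro mult_left_mono divide_right_mono_ennreal) auto
  also have "\<dots> = ennreal (F * a^(n-k) * Pre * T * E) * Zg k n \<beta> / Z"
    using F0 Pre0 T0 E0 a by (simp add: ennreal_mult'' ennreal_times_divide mult.assoc ennreal_mult)
  also have "\<dots> \<le> ennreal (F * a^(n-k) * Pre * T * E / cN n \<beta> ^ k)"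
  proof (rule ratio_bound)
    show "ennreal (cN n \<beta> ^ k) * Zg k n \<beta> \<le> Z"
      unfolding Z_def Zconst_Zg using Zg_iter[OF kn(2) b0] .
    show "0 < cN n \<beta> ^ k" using cN_pos kn by simp
    show "0 \<le> F * a^(n-k) * Pre * T * E" using F0 Pre0 T0 E0 a by simp
  qed
  also have "F * a^(n-k) * Pre * T * E / cN n \<beta> ^ k = fact n / fact (n-k) * (\<Prod>i<k. exp (x i / \<delta>)) / a^k
      * exp (- (1/2) * (\<Sum>i<k. (t i)\<^sup>2)) * exp (\<beta> * ((n+k) * (\<Sum>i<k. \<bar>t i\<bar>)))
      * (exp (n * (\<beta>*k)\<^sup>2 / (2*\<eta>)) * (1/sqrt(1-\<eta>))^n * ((1/sqrt(1-\<eta>)) powr \<beta>)^(n*n)) / cN n \<beta> ^ k"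
  proof -
    have an: "a^n = a^(n-k) * a^k" using kn by (simp add: power_add[symmetric])
    have ap: "a^(n-k) * Pre = (\<Prod>i<k. exp (x i / \<delta>)) / a^k" unfolding Pre_def an using a by simp
    have "F * a^(n-k) * Pre * T * E / cN n \<beta> ^ k = F * (a^(n-k) * Pre) * T * E / cN n \<beta> ^ k"
      by (simp only: mult.assoc)
    also have "\<dots> = F * ((\<Prod>i<k. exp (x i / \<delta>)) / a^k) * T * E / cN n \<beta> ^ k" by (simp only: ap)
    finally show ?thesis unfolding F_def T_def E_def by (simp add: mult.assoc)
  qed
  finally show ?thesis by simp
qed

lemma aux_div: "n \<noteq> 0 \<Longrightarrow> d \<noteq> 0 \<Longrightarrow> s \<noteq> 0 \<Longrightarrow> n / (d * s) * (1 / n) * (u * d * v) = u * v / (s :: real)"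
  by (simp add: field_simps)

lemma factor_bound:
  fixes n k :: nat and d \<delta> \<beta> B x :: real
  defines "L \<equiv> ln (real n)"
  defines "s \<equiv> sqrt (2 * L)"
  defines "q \<equiv> ln L + 2 * ln d + ln (4 * pi)"
  defines "a \<equiv> d * s" and "b \<equiv> s - q / (2 * s)"
  assumes n3: "n \<ge> 3" and d: "d > 0" and xB: "\<bar>x\<bar> \<le> B" and ba: "\<bar>1/\<delta> - b/a\<bar> \<le> 1"
    and \<beta>: "\<beta> \<ge> 0" and kn: "k \<le> n"
    and c4: "\<beta> * n * \<bar>b\<bar> \<le> 1/4" and c5: "\<beta> * n * B / a \<le> 1/4"
  shows "n * exp (x/\<delta>) / a * exp (- (1/2) * (b + x/a)\<^sup>2) * exp (\<beta> * (n + k) * \<bar>b + x/a\<bar>)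
           \<le> sqrt (2*pi) * exp B * exp 1"
proof -
  have "ln (3::real) \<ge> 1"
    using exp_le by (simp add: ln_ge_iff)
  moreover have "ln (3::real) \<le> L" unfolding L_def using n3 by simp
  ultimately have L1: "L > 0" by simp
  have s0: "s > 0" using L1 by (simp add: s_def)
  have ss: "s\<^sup>2 = 2 * L" using L1 by (simp add: s_def)
  have a0: "a > 0" using s0 d by (simp add: a_def)
  define t where "t = b + x / a"
  have B0: "B \<ge> 0" using xB by simp
  have h1: "- (1/2) * t\<^sup>2 \<le> - (1/2) * b\<^sup>2 - b * x / a"
  proof -
    have "t\<^sup>2 = b\<^sup>2 + 2 * (b * x / a) + (x / a)\<^sup>2" unfolding t_def by (simp add: power2_eq_square algebra_simps)
    moreover have "(x / a)\<^sup>2 \<ge> 0" by simp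
    ultimately show ?thesis by linarith
  qed
  have h2: "b\<^sup>2 \<ge> 2 * L - q"
  proof -
    have "b\<^sup>2 = s\<^sup>2 - q + (q / (2 * s))\<^sup>2" unfolding b_def using s0
      by (simp add: power2_eq_square field_simps)
    then show ?thesis using ss by simp
  qed
  have h3: "x / \<delta> - b * x / a \<le> B"
  proof -
    have "x / \<delta> - b * x / a = x * (1/\<delta> - b/a)" by (simp add: field_simps)
    also have "\<dots> \<le> \<bar>x\<bar> * \<bar>1/\<delta> - b/a\<bar>" by (metis abs_ge_self abs_mult)
    also have "\<dots> \<le> B * 1" using xB ba by (intro mult_mono) auto
    finally show ?thesis by simp
  qed
  have h4: "\<beta> * (n + k) * \<bar>t\<bar> \<le> 1"
  proof -
    have xa: "\<bar>x / a\<bar> \<le> B / a" using xB a0 by (simp add: abs_divide divide_right_mono)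
    have "\<bar>t\<bar> \<le> \<bar>b\<bar> + \<bar>x / a\<bar>" unfolding t_def by (rule abs_triangle_ineq)
    with xa have f1: "\<bar>t\<bar> \<le> \<bar>b\<bar> + B / a" by linarith
    have f2: "\<beta> * (n + k) \<le> 2 * (\<beta> * n)"
    proof -
      have "real n + real k \<le> 2 * real n" using kn by simp
      then have "\<beta> * (real n + real k) \<le> \<beta> * (2 * real n)" using \<beta> by (rule mult_left_mono)
      then show ?thesis by simp
    qed
    have "\<beta> * (n + k) * \<bar>t\<bar> \<le> 2 * (\<beta> * n) * (\<bar>b\<bar> + B / a)"
      by (rule mult_mono[OF f2 f1]) (use \<beta> in auto)
    also have "\<dots> = 2 * (\<beta> * n * \<bar>b\<bar>) + 2 * (\<beta> * n * B / a)" by (simp add: algebra_simps)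
    also have "\<dots> \<le> 1" using c4 c5 by linarith
    finally show ?thesis .
  qed
  have "n * exp (x/\<delta>) / a * exp (- (1/2) * t\<^sup>2) * exp (\<beta> * (n + k) * \<bar>t\<bar>)
      = n / a * exp (x/\<delta> + (- (1/2) * t\<^sup>2) + \<beta> * (n + k) * \<bar>t\<bar>)"
    by (simp only: exp_add) (simp add: mult_ac)
  also have "\<dots> \<le> n / a * exp (- (L - q/2) + B + 1)"
    using h1 h2 h3 h4 a0 by (intro mult_left_mono exp_mono) auto
  also have "\<dots> = n / a * exp (- L) * exp (q / 2) * exp B * exp 1"
  proof -
    have "exp (- (L - q/2) + B + 1) = exp (- L) * exp (q / 2) * exp B * exp 1"
      by (simp only: exp_add[symmetric]) (simp add: algebra_simps)
    then show ?thesis by (simp only: mult.assoc)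
  qed
  also have "n / a * exp (- L) * exp (q / 2) = sqrt (2 * pi)"
  proof -
    have en: "exp (- L) = 1 / n" unfolding L_def using n3 by (simp add: exp_minus inverse_eq_divide)
    have eq: "exp (q / 2) = sqrt L * d * sqrt (4 * pi)"
    proof -
      have "q / 2 = ln (sqrt L) + ln d + ln (sqrt (4 * pi))"
        unfolding q_def using L1 by (simp add: ln_sqrt)
      then have "exp (q / 2) = exp (ln (sqrt L)) * exp (ln d) * exp (ln (sqrt (4 * pi)))" by (simp only: exp_add)
      then show ?thesis using L1 d by simp
    qed
    have "n / a * exp (- L) * exp (q / 2) = sqrt L * sqrt (4 * pi) / s"
      unfolding en eq a_def using n3 d s0 aux_div[of "real n" d s "sqrt L" "sqrt (4 * pi)"] by simp
    also have "\<dots> = sqrt (2 * pi)"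
    proof -
      have "sqrt L * sqrt (4 * pi) = sqrt (2 * pi) * s"
      proof -
        have "sqrt L * sqrt (4 * pi) = sqrt (L * (4 * pi))" by (simp only: real_sqrt_mult)
        also have "L * (4 * pi) = (2 * pi) * (2 * L)" by simp
        also have "sqrt ((2 * pi) * (2 * L)) = sqrt (2 * pi) * s" unfolding s_def by (simp only: real_sqrt_mult)
        finally show ?thesis .
      qed
      then show ?thesis using s0 by simp
    qed
    finally show ?thesis .
  qed
  finally show ?thesis unfolding t_def .
qed

lemma E_bound:
  fixes n k :: nat and \<beta> :: real
  assumes k1: "1 \<le> k" and kn: "k \<le> n" and b0: "\<beta> \<ge> 0" and bn: "\<beta> * n \<le> 1"
  defines "\<eta> \<equiv> k / (2 * n)"
  shows "exp (n * (\<beta>*k)\<^sup>2 / (2*\<eta>)) * (1/sqrt(1-\<eta>))^n * ((1/sqrt(1-\<eta>)) powr \<beta>)^(n*n) \<le> exp (2 * k)"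
proof -
  have n0: "real n > 0" using k1 kn by simp
  have e0: "\<eta> > 0" and e1: "\<eta> \<le> 1/2" using k1 kn n0 by (auto simp: \<eta>_def field_simps)
  have p1: "n * (\<beta>*k)\<^sup>2 / (2*\<eta>) \<le> k"
  proof -
    have "n * (\<beta>*k)\<^sup>2 / (2*\<eta>) = (\<beta> * n)\<^sup>2 * k" using n0 k1 by (simp add: \<eta>_def field_simps power2_eq_square)
    also have "\<dots> \<le> 1 * real k"
    proof (rule mult_right_mono)
      have "0 \<le> \<beta> * n" using b0 by simp
      then show "(\<beta> * n)\<^sup>2 \<le> 1" using bn by (simp add: power_le_one)
    qed simp
    finally show ?thesis by simp
  qed
  define u where "u = 1 / sqrt (1 - \<eta>)"
  have u0: "u > 0" using e1 by (simp add: u_def)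
  have lnu: "ln u = - (1/2) * ln (1 - \<eta>)" using e1 by (simp add: u_def ln_div ln_sqrt)
  have "ln (1 - \<eta>) \<ge> - \<eta> - 2 * \<eta>\<^sup>2" using e0 e1 by (intro ln_one_minus_pos_lower_bound) auto
  moreover have "2 * \<eta>\<^sup>2 \<le> \<eta>" using e0 e1 by (simp add: power2_eq_square)
  ultimately have lnu_le: "ln u \<le> \<eta>" using lnu by simp
  define ee where "ee = real n + \<beta> * real (n * n)"
  have ee0: "ee \<ge> 0" using b0 by (simp add: ee_def)
  have "u ^ n * (u powr \<beta>) ^ (n*n) = u powr ee"
    using u0 by (simp add: ee_def powr_add powr_realpow[symmetric] powr_powr)
  also have "\<dots> = exp (ee * ln u)" using u0 by (simp add: powr_def mult.commute)
  also have "\<dots> \<le> exp (ee * \<eta>)" using ee0 lnu_le by (intro exp_mono mult_left_mono) auto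
  also have "ee * \<eta> = k * (1 + \<beta> * n) / 2" using n0 by (simp add: ee_def \<eta>_def field_simps)
  also have "\<dots> \<le> k"
  proof -
    have "real k * (\<beta> * n) \<le> real k * 1" using bn by (intro mult_left_mono) auto
    then show ?thesis by (simp add: field_simps)
  qed
  finally have p2: "u ^ n * (u powr \<beta>) ^ (n*n) \<le> exp k" by simp
  have "exp (n * (\<beta>*k)\<^sup>2 / (2*\<eta>)) * u^n * (u powr \<beta>)^(n*n) = exp (n * (\<beta>*k)\<^sup>2 / (2*\<eta>)) * (u^n * (u powr \<beta>)^(n*n))"
    by (simp add: mult.assoc)
  also have "\<dots> \<le> exp k * exp k" using p1 p2 u0 by (intro mult_mono) auto
  also have "\<dots> = exp (2 * k)" by (simp add: exp_add[symmetric])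
  finally show ?thesis by (simp add: u_def)
qed

lemma cN_bound:
  fixes n :: nat and \<beta> :: real
  assumes "n \<ge> 1" "\<beta> \<ge> 0" "\<beta> * n * ln (2 * n) \<le> 1"
  shows "1 / cN n \<beta> \<le> exp (3/2)"
proof -
  have pw: "(1/(2*real n)) powr \<beta> = exp (- (\<beta> * ln (2 * n)))"
    using assms by (simp add: powr_def ln_div)
  have "((1/(2*real n)) powr \<beta>) ^ n = exp (real n * (- (\<beta> * ln (2 * n))))"
    by (simp only: pw exp_of_nat_mult)
  then have "cN n \<beta> = exp (-1/2) * exp (real n * (- (\<beta> * ln (2 * n))))"
    unfolding cN_def by simp
  also have "\<dots> = exp (-1/2 - \<beta> * n * ln (2 * n))" by (simp add: exp_add[symmetric] algebra_simps)
  also have "\<dots> \<ge> exp (-3/2)" using assms by simp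
  finally have "cN n \<beta> \<ge> exp (-3/2)" .
  moreover have "cN n \<beta> > 0" using assms(1) by (rule cN_pos)
  ultimately have "1 / cN n \<beta> \<le> 1 / exp (-3/2)" by (intro divide_left_mono) auto
  also have "\<dots> = exp (3/2)" by (simp add: exp_minus inverse_eq_divide)
  finally show ?thesis .
qed

lemma fact_ratio_le: "k \<le> n \<Longrightarrow> (fact n / fact (n-k) :: real) \<le> real n ^ k"
proof -
  assume kn: "k \<le> n"
  have dv: "fact (n-k) dvd (fact n :: nat)" by (rule fact_dvd) simp
  have "(fact n / fact (n-k) :: real) = real (fact n div fact (n-k))"
    using dv by (simp add: real_of_nat_div of_nat_fact)
  also have "\<dots> \<le> real (n ^ k)" using fact_div_fact_le_pow[OF kn] by (simp only: of_nat_le_iff)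
  finally show ?thesis by simp
qed

lemma final_real:
  fixes n k :: nat and d \<delta> \<beta> B :: real and x :: "nat \<Rightarrow> real"
  defines "L \<equiv> ln (real n)"
  defines "s \<equiv> sqrt (2 * L)"
  defines "q \<equiv> ln L + 2 * ln d + ln (4 * pi)"
  defines "a \<equiv> d * s" and "b \<equiv> s - q / (2 * s)"
  defines "\<eta> \<equiv> k / (2 * n)"
  assumes n3: "n \<ge> 3" and d: "d > 0" and B0: "B \<ge> 0" and b0: "\<beta> \<ge> 0" and k1: "1 \<le> k" and kn: "k \<le> n"
    and xB: "\<forall>i<k. \<bar>x i\<bar> \<le> B" and ba: "\<bar>1/\<delta> - b/a\<bar> \<le> 1"
    and c4: "\<beta> * n * \<bar>b\<bar> \<le> 1/4" and c5: "\<beta> * n * B / a \<le> 1/4"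
    and c6: "\<beta> * n \<le> 1" and c7: "\<beta> * n * ln (2 * n) \<le> 1"
  shows "fact n / fact (n-k) * (\<Prod>i<k. exp (x i / \<delta>)) / a^k
      * exp (- (1/2) * (\<Sum>i<k. (b + x i / a)\<^sup>2)) * exp (\<beta> * ((n+k) * (\<Sum>i<k. \<bar>b + x i / a\<bar>)))
      * (exp (n * (\<beta>*k)\<^sup>2 / (2*\<eta>)) * (1/sqrt(1-\<eta>))^n * ((1/sqrt(1-\<eta>)) powr \<beta>)^(n*n))
      / cN n \<beta> ^ k \<le> (sqrt (2*pi) * exp B * exp 1 * exp 2 * exp (3/2)) ^ k"
proof -
  define t where "t i = b + x i / a" for i
  have L0: "L > 0" unfolding L_def using n3 by simp
  have a0: "a > 0" unfolding a_def s_def using d L0 by simp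
  define g where "g i = n * exp (x i/\<delta>) / a * exp (- (1/2) * (t i)\<^sup>2) * exp (\<beta> * (n + k) * \<bar>t i\<bar>)" for i
  define \<theta>1 where "\<theta>1 = sqrt (2*pi) * exp B * exp 1"
  have th0: "\<theta>1 \<ge> 0" by (simp add: \<theta>1_def)
  define P where "P = (\<Prod>i<k. exp (x i / \<delta>))"
  define e1 where "e1 = exp (- (1/2) * (\<Sum>i<k. (t i)\<^sup>2))"
  define e2 where "e2 = exp (\<beta> * ((n+k) * (\<Sum>i<k. \<bar>t i\<bar>)))"
  define E where "E = exp (n * (\<beta>*k)\<^sup>2 / (2*\<eta>)) * (1/sqrt(1-\<eta>))^n * ((1/sqrt(1-\<eta>)) powr \<beta>)^(n*n)"
  have g0: "g i \<ge> 0" for i using a0 by (simp add: g_def)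
  have gb: "g i \<le> \<theta>1" if "i < k" for i
  proof -
    have xBi: "\<bar>x i\<bar> \<le> B" using xB that by simp
    show ?thesis
      using factor_bound[OF n3 d xBi ba[unfolded a_def b_def q_def s_def L_def] b0 kn
            c4[unfolded a_def b_def q_def s_def L_def] c5[unfolded a_def b_def q_def s_def L_def]]
      unfolding g_def t_def \<theta>1_def a_def b_def q_def s_def L_def .
  qed
  have eqG: "real n ^ k * P / a^k * e1 * e2 = (\<Prod>i<k. g i)"
    unfolding g_def P_def e1_def e2_def
    by (simp add: prod.distrib exp_sum sum_distrib_left prod_dividef power_divide mult_ac)
  have G: "(\<Prod>i<k. g i) \<le> \<theta>1 ^ k"
  proof -
    have "(\<Prod>i<k. g i) \<le> (\<Prod>i<k. \<theta>1)" using g0 gb by (intro prod_mono) auto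
    then show ?thesis by simp
  qed
  have X0: "P / a^k * e1 * e2 \<ge> 0" using a0 by (simp add: P_def e1_def e2_def prod_nonneg)
  have X: "fact n / fact (n-k) * P / a^k * e1 * e2 \<le> \<theta>1 ^ k"
  proof -
    have "fact n / fact (n-k) * P / a^k * e1 * e2 = (fact n / fact (n-k)) * (P / a^k * e1 * e2)" by simp
    also have "\<dots> \<le> real n ^ k * (P / a^k * e1 * e2)"
      using fact_ratio_le[OF kn] X0 by (intro mult_right_mono) auto
    also have "\<dots> = real n ^ k * P / a^k * e1 * e2" by simp
    finally show ?thesis using eqG G by simp
  qed
  have Eb: "E \<le> exp 2 ^ k"
    using E_bound[OF k1 kn b0 c6] unfolding E_def \<eta>_def by (simp add: exp_of_nat_mult[symmetric] mult.commute)
  have E0: "E \<ge> 0" unfolding E_def using n3 kn by (simp add: \<eta>_def)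
  have cpos: "cN n \<beta> > 0" using n3 by (intro cN_pos) simp
  have cb: "1 / cN n \<beta> ^ k \<le> exp (3/2) ^ k"
  proof -
    have "1 / cN n \<beta> \<le> exp (3/2)" using cN_bound[of n \<beta>] n3 b0 c7 by simp
    then have "(1 / cN n \<beta>) ^ k \<le> exp (3/2) ^ k" using cpos by (intro power_mono) auto
    then show ?thesis by (simp add: power_one_over)
  qed
  have "fact n / fact (n-k) * P / a^k * e1 * e2 * E / cN n \<beta> ^ k
        = (fact n / fact (n-k) * P / a^k * e1 * e2) * E * (1 / cN n \<beta> ^ k)" by simp
  also have "\<dots> \<le> \<theta>1 ^ k * exp 2 ^ k * exp (3/2) ^ k"
    using X Eb cb E0 X0 cpos th0
    by (intro mult_mono) (auto simp: mult_nonneg_nonneg)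
  also have "\<dots> = (sqrt (2*pi) * exp B * exp 1 * exp 2 * exp (3/2)) ^ k"
    unfolding \<theta>1_def by (simp add: power_mult_distrib)
  finally show ?thesis unfolding P_def e1_def e2_def E_def t_def by simp
qed

lemma ba_eq:
  fixes L d q :: real
  assumes "L > 0" "d > 0"
  shows "(sqrt (2*L) - q / (2 * sqrt (2*L))) / (d * sqrt (2*L)) = 1/d - (q / L) * (1 / (4 * d))"
proof -
  define s where "s = sqrt (2*L)"
  have s0: "s > 0" using assms by (simp add: s_def)
  have ss: "s * s = 2 * L" using assms by (simp add: s_def)
  have "(s - q / (2 * s)) / (d * s) = 1/d - q / (2 * (s * s) * d)"
    using s0 assms by (simp add: field_simps)
  also have "\<dots> = 1/d - (q / L) * (1 / (4 * d))" unfolding ss using assms by (simp add: field_simps)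
  finally show ?thesis by (simp add: s_def)
qed

lemma bL_eq:
  fixes L q :: real
  assumes "L > 0"
  shows "sqrt (2*L) - q / (2 * sqrt (2*L)) = L * (sqrt (2*L) / L - q / (2 * L * sqrt (2*L)))"
  using assms by (simp add: field_simps)

theorem lemma3p6:
  fixes \<beta> ds :: "nat \<Rightarrow> real" and \<delta> :: real and K :: "real set"
  assumes "\<forall>n. \<beta> n \<ge> 0"
    and "(\<lambda>n. real n * ln (real n) * \<beta> n) \<longlonglongrightarrow> 0"
    and "ds \<longlonglongrightarrow> \<delta>" and "\<delta> > 0"
    and "compact K"
  shows "\<exists>\<Theta>>0. \<forall>\<^sub>F n in sequentially. \<forall>k. 1 \<le> k \<and> k \<le> n \<longrightarrow>
           (\<forall>x. (\<forall>i<k. x i \<in> K) \<longrightarrow>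
              corr n k (\<beta> n) (a_seq ds n) (b_seq ds n) \<delta> x \<le> ennreal (\<Theta> ^ k))"
proof -
  note hb = assms(2)
  have \<delta>0: "\<delta> > 0" by (rule assms(4))
  obtain B0 where hB0: "\<forall>x\<in>K. \<bar>x\<bar> \<le> B0"
    using compact_imp_bounded[OF assms(5)] by (auto simp: bounded_real)
  define B where "B = max B0 0"
  have B0: "B \<ge> 0" by (simp add: B_def)
  have KB: "\<bar>x\<bar> \<le> B" if "x \<in> K" for x using hB0 that by (auto simp: B_def)
  define \<Theta> where "\<Theta> = sqrt (2*pi) * exp B * exp 1 * exp 2 * exp (3/2)"
  have \<Theta>0: "\<Theta> > 0" by (simp add: \<Theta>_def)
  have ev3: "\<forall>\<^sub>F n in sequentially. 3 \<le> n" by (rule eventually_ge_at_top)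
  have evL: "\<forall>\<^sub>F n in sequentially. ln (real n) > 0"
    using ev3 by eventually_elim simp
  have evd: "\<forall>\<^sub>F n in sequentially. 0 < ds n" using order_tendstoD(1)[OF assms(3) \<delta>0] .
  have t3: "(\<lambda>n. 1 / ln (real n)) \<longlonglongrightarrow> 0" by real_asymp
  have tA: "(\<lambda>n. \<beta> n * real n) \<longlonglongrightarrow> 0"
  proof -
    have "(\<lambda>n. real n * ln (real n) * \<beta> n * (1 / ln (real n))) \<longlonglongrightarrow> 0 * 0"
      by (intro tendsto_mult hb t3)
    moreover have "\<forall>\<^sub>F n in sequentially. real n * ln (real n) * \<beta> n * (1 / ln (real n)) = \<beta> n * real n"
      using evL by eventually_elim simp
    ultimately show ?thesis by (rule tendsto_eq_rhs[OF Lim_transform_eventually]) simp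
  qed
  have tB: "(\<lambda>n. \<beta> n * real n * ln (2 * real n)) \<longlonglongrightarrow> 0"
  proof -
    have r: "(\<lambda>n. ln (2 * real n) / ln (real n)) \<longlonglongrightarrow> 1" by real_asymp
    have "(\<lambda>n. real n * ln (real n) * \<beta> n * (ln (2 * real n) / ln (real n))) \<longlonglongrightarrow> 0 * 1"
      by (intro tendsto_mult hb r)
    moreover have "\<forall>\<^sub>F n in sequentially. real n * ln (real n) * \<beta> n * (ln (2 * real n) / ln (real n)) = \<beta> n * real n * ln (2 * real n)"
      using evL by eventually_elim simp
    ultimately show ?thesis by (rule tendsto_eq_rhs[OF Lim_transform_eventually]) simp
  qed
  have t1: "(\<lambda>n. 1 / ds n) \<longlonglongrightarrow> 1 / \<delta>" using tendsto_divide[OF tendsto_const assms(3)] \<delta>0 by simp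
  have t2: "(\<lambda>n. ln (ln (real n)) / ln (real n)) \<longlonglongrightarrow> 0" by real_asymp
  have t4: "(\<lambda>n. ln (ds n)) \<longlonglongrightarrow> ln \<delta>" using tendsto_ln[OF assms(3)] \<delta>0 by simp
  have t5: "(\<lambda>n. 1 / (4 * ds n)) \<longlonglongrightarrow> 1 / (4 * \<delta>)"
  proof -
    have h: "(\<lambda>n. 4 * ds n) \<longlonglongrightarrow> 4 * \<delta>" by (intro tendsto_mult tendsto_const assms(3))
    show ?thesis by (rule tendsto_divide[OF tendsto_const h]) (use \<delta>0 in simp)
  qed
  have tC: "(\<lambda>n. b_seq ds n / a_seq ds n) \<longlonglongrightarrow> 1 / \<delta>"
  proof -
    have "(\<lambda>n. 1 / ds n - (ln (ln (real n)) / ln (real n) + (2 * ln (ds n) + ln (4 * pi)) * (1 / ln (real n))) * (1 / (4 * ds n)))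
        \<longlonglongrightarrow> 1 / \<delta> - (0 + (2 * ln \<delta> + ln (4 * pi)) * 0) * (1 / (4 * \<delta>))"
      by (intro tendsto_diff tendsto_mult tendsto_add t1 t2 t3 t4 t5 tendsto_const)
    moreover have "\<forall>\<^sub>F n in sequentially. 1 / ds n - (ln (ln (real n)) / ln (real n) + (2 * ln (ds n) + ln (4 * pi)) * (1 / ln (real n))) * (1 / (4 * ds n))
        = b_seq ds n / a_seq ds n"
      using evL evd
    proof eventually_elim
      case (elim n)
      have "b_seq ds n / a_seq ds n = 1 / ds n - ((ln (ln (real n)) + 2 * ln (ds n) + ln (4 * pi)) / ln (real n)) * (1 / (4 * ds n))"
        unfolding a_seq_def b_seq_def by (rule ba_eq[OF elim])
      also have "(ln (ln (real n)) + 2 * ln (ds n) + ln (4 * pi)) / ln (real n) = ln (ln (real n)) / ln (real n) + (2 * ln (ds n) + ln (4 * pi)) * (1 / ln (real n))"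
        by (simp add: add_divide_distrib)
      finally show ?case by simp
    qed
    ultimately show ?thesis by (rule tendsto_eq_rhs[OF Lim_transform_eventually]) simp
  qed
  have tD: "(\<lambda>n. \<beta> n * real n * b_seq ds n) \<longlonglongrightarrow> 0"
  proof -
    have u1: "(\<lambda>n. sqrt (2 * ln (real n)) / ln (real n)) \<longlonglongrightarrow> 0" by real_asymp
    have u2: "(\<lambda>n. ln (ln (real n)) / (2 * ln (real n) * sqrt (2 * ln (real n)))) \<longlonglongrightarrow> 0" by real_asymp
    have u3: "(\<lambda>n. 1 / (2 * ln (real n) * sqrt (2 * ln (real n)))) \<longlonglongrightarrow> 0" by real_asymp
    have "(\<lambda>n. (real n * ln (real n) * \<beta> n) * (sqrt (2 * ln (real n)) / ln (real n)
        - (ln (ln (real n)) / (2 * ln (real n) * sqrt (2 * ln (real n))) + (2 * ln (ds n) + ln (4 * pi)) * (1 / (2 * ln (real n) * sqrt (2 * ln (real n)))))))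
        \<longlonglongrightarrow> 0 * (0 - (0 + (2 * ln \<delta> + ln (4 * pi)) * 0))"
      by (intro tendsto_diff tendsto_mult tendsto_add hb u1 u2 u3 t4 tendsto_const)
    moreover have "\<forall>\<^sub>F n in sequentially. (real n * ln (real n) * \<beta> n) * (sqrt (2 * ln (real n)) / ln (real n)
        - (ln (ln (real n)) / (2 * ln (real n) * sqrt (2 * ln (real n))) + (2 * ln (ds n) + ln (4 * pi)) * (1 / (2 * ln (real n) * sqrt (2 * ln (real n))))))
        = \<beta> n * real n * b_seq ds n"
      using evL
    proof eventually_elim
      case (elim n)
      let ?L = "ln (real n)"
      let ?q = "ln (ln (real n)) + 2 * ln (ds n) + ln (4 * pi)"
      have "b_seq ds n = ?L * (sqrt (2 * ?L) / ?L - ?q / (2 * ?L * sqrt (2 * ?L)))"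
        unfolding b_seq_def by (rule bL_eq[OF elim])
      also have "?q / (2 * ?L * sqrt (2 * ?L)) = ln (ln (real n)) / (2 * ln (real n) * sqrt (2 * ln (real n))) + (2 * ln (ds n) + ln (4 * pi)) * (1 / (2 * ln (real n) * sqrt (2 * ln (real n))))"
        by (simp add: add_divide_distrib)
      finally show ?case by (simp add: mult_ac)
    qed
    ultimately show ?thesis by (rule tendsto_eq_rhs[OF Lim_transform_eventually]) simp
  qed
  have tE: "(\<lambda>n. \<beta> n * real n * B / a_seq ds n) \<longlonglongrightarrow> 0"
  proof -
    have u: "(\<lambda>n. 1 / sqrt (2 * ln (real n))) \<longlonglongrightarrow> 0" by real_asymp
    have "(\<lambda>n. (\<beta> n * real n) * B * (1 / ds n) * (1 / sqrt (2 * ln (real n)))) \<longlonglongrightarrow> 0 * B * (1 / \<delta>) * 0"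
      by (intro tendsto_mult tA t1 u tendsto_const)
    moreover have "\<forall>\<^sub>F n in sequentially. (\<beta> n * real n) * B * (1 / ds n) * (1 / sqrt (2 * ln (real n))) = \<beta> n * real n * B / a_seq ds n"
      by (simp add: a_seq_def)
    ultimately show ?thesis by (rule tendsto_eq_rhs[OF Lim_transform_eventually]) simp
  qed
  have e6: "\<forall>\<^sub>F n in sequentially. \<beta> n * real n < 1" using order_tendstoD(2)[OF tA] by simp
  have e7: "\<forall>\<^sub>F n in sequentially. \<beta> n * real n * ln (2 * real n) < 1" using order_tendstoD(2)[OF tB] by simp
  have e3: "\<forall>\<^sub>F n in sequentially. \<bar>b_seq ds n / a_seq ds n - 1 / \<delta>\<bar> < 1"
    using tC[unfolded tendsto_iff] by (auto simp: dist_real_def)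
  have e4: "\<forall>\<^sub>F n in sequentially. \<bar>\<beta> n * real n * b_seq ds n\<bar> < 1/4"
    using order_tendstoD(2)[OF tendsto_rabs_zero[OF tD], of "1/4"] by simp
  have e5: "\<forall>\<^sub>F n in sequentially. \<beta> n * real n * B / a_seq ds n < 1/4"
    using order_tendstoD(2)[OF tE, of "1/4"] by simp
  show ?thesis
  proof (intro exI conjI)
    show "\<Theta> > 0" by (rule \<Theta>0)
    show "\<forall>\<^sub>F n in sequentially. \<forall>k. 1 \<le> k \<and> k \<le> n \<longrightarrow>
           (\<forall>x. (\<forall>i<k. x i \<in> K) \<longrightarrow>
              corr n k (\<beta> n) (a_seq ds n) (b_seq ds n) \<delta> x \<le> ennreal (\<Theta> ^ k))"
      using ev3 evL evd e3 e4 e5 e6 e7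
    proof eventually_elim
      case (elim n)
      note n3 = elim(1) and Lp = elim(2) and dp = elim(3)
      have bn0: "\<beta> n \<ge> 0" using assms(1) by simp
      have a0: "a_seq ds n > 0" using Lp dp by (simp add: a_seq_def)
      show ?case
      proof (intro allI impI, elim conjE)
        fix k x assume k1: "1 \<le> k" and kn: "k \<le> n" and xK: "\<forall>i<k. x i \<in> K"
        define \<eta> :: real where "\<eta> = k / (2 * n)"
        have eta0: "0 < \<eta>" and eta1: "\<eta> < 1" using k1 kn by (auto simp: \<eta>_def field_simps)
        have xB: "\<forall>i<k. \<bar>x i\<bar> \<le> B" using xK KB by auto
        have ba: "\<bar>1 / \<delta> - b_seq ds n / a_seq ds n\<bar> \<le> 1" using elim(4) by (simp add: abs_minus_commute)
        have c4: "\<beta> n * n * \<bar>b_seq ds n\<bar> \<le> 1/4" using elim(5) bn0 by (simp add: abs_mult)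
        have c5: "\<beta> n * n * B / a_seq ds n \<le> 1/4" using elim(6) by simp
        have c6: "\<beta> n * n \<le> 1" using elim(7) by simp
        have c7: "\<beta> n * n * ln (2 * n) \<le> 1" using elim(8) by simp
        define A where "A = fact n / fact (n-k) * (\<Prod>i<k. exp (x i / \<delta>)) / (a_seq ds n)^k
            * exp (- (1/2) * (\<Sum>i<k. (b_seq ds n + x i / a_seq ds n)\<^sup>2)) * exp (\<beta> n * (real (n+k) * (\<Sum>i<k. \<bar>b_seq ds n + x i / a_seq ds n\<bar>)))
            * (exp (n * (\<beta> n*k)\<^sup>2 / (2*\<eta>)) * (1/sqrt(1-\<eta>))^n * ((1/sqrt(1-\<eta>)) powr \<beta> n)^(n*n)) / cN n (\<beta> n) ^ k"
        have "corr n k (\<beta> n) (a_seq ds n) (b_seq ds n) \<delta> x \<le> ennreal A"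
          using corr_bound[OF k1 kn a0 \<delta>0 bn0 eta0 eta1, where x=x and b="b_seq ds n"] unfolding A_def by (simp only: of_nat_add)
        also have "A \<le> \<Theta> ^ k"
          using final_real[OF n3 dp B0 bn0 k1 kn xB ba[unfolded a_seq_def b_seq_def]
                c4[unfolded a_seq_def b_seq_def] c5[unfolded a_seq_def] c6 c7]
          unfolding A_def \<Theta>_def \<eta>_def a_seq_def b_seq_def .
        then have "ennreal A \<le> ennreal (\<Theta> ^ k)" by (rule ennreal_leI)
        finally show "corr n k (\<beta> n) (a_seq ds n) (b_seq ds n) \<delta> x \<le> ennreal (\<Theta> ^ k)" .
      qed
    qed
  qed
qed

end
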